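(* Let $G$ be a connected graph with $\delta(G)=1$ and girth at least $15$. If $G\in\mathcal U$ and $s$ is a single star support vertex of $G$, then $s$ has at most one neighbor that is not a leaf.
   Context: All graphs are finite and simple. A set $P\subseteq V(G)$ is an open packing if no two distinct vertices of $P$ have a common neighbor; it is maximal if maximal under inclusion among open packings. $\rho^o(G)$ is the maximum size of an open packing and $\rho^o_L(G)$ the minimum size of a maximal open packing; $\mathcal U$ is the class of graphs with $\rho^o_L(G)=\rho^o(G)$. A leaf is a vertex of degree $1$; a support vertex is a vertex adjacent to at least one leaf; $S_G$ is the set of support vertices. A single star support vertex is a support vertex that is an isolated vertex of the induced subgraph $G[S_G]$ (i.e., not adjacent to any other support vertex); a double star support vertex is a support vertex adjacent to another support vertex. The girth is the length of a shortest cycle ($\infty$ if acyclic). *)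

theory Defs
  imports Main
begin

definition graph :: "'a set \<Rightarrow> ('a \<Rightarrow> 'a \<Rightarrow> bool) \<Rightarrow> bool" where
  "graph V E \<longleftrightarrow> finite V \<and> (\<forall>u v. E u v \<longrightarrow> u \<in> V \<and> v \<in> V)
     \<and> (\<forall>u v. E u v \<longrightarrow> E v u) \<and> (\<forall>v. \<not> E v v)"

definition nbhd :: "'a set \<Rightarrow> ('a \<Rightarrow> 'a \<Rightarrow> bool) \<Rightarrow> 'a \<Rightarrow> 'a set" where
  "nbhd V E v = {u \<in> V. E v u}"

definition degree :: "'a set \<Rightarrow> ('a \<Rightarrow> 'a \<Rightarrow> bool) \<Rightarrow> 'a \<Rightarrow> nat" where
  "degree V E v = card (nbhd V E v)"

definition min_degree :: "'a set \<Rightarrow> ('a \<Rightarrow> 'a \<Rightarrow> bool) \<Rightarrow> nat" where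
  "min_degree V E = Min (degree V E ` V)"

definition connected :: "'a set \<Rightarrow> ('a \<Rightarrow> 'a \<Rightarrow> bool) \<Rightarrow> bool" where
  "connected V E \<longleftrightarrow> V \<noteq> {} \<and>
     (\<forall>u\<in>V. \<forall>v\<in>V. (\<lambda>x y. x \<in> V \<and> y \<in> V \<and> E x y)\<^sup>*\<^sup>* u v)"

definition leaf :: "'a set \<Rightarrow> ('a \<Rightarrow> 'a \<Rightarrow> bool) \<Rightarrow> 'a \<Rightarrow> bool" where
  "leaf V E v \<longleftrightarrow> v \<in> V \<and> degree V E v = 1"

definition support_vertex :: "'a set \<Rightarrow> ('a \<Rightarrow> 'a \<Rightarrow> bool) \<Rightarrow> 'a \<Rightarrow> bool" where
  "support_vertex V E s \<longleftrightarrow> s \<in> V \<and> (\<exists>l\<in>V. E s l \<and> leaf V E l)"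

definition single_star_support :: "'a set \<Rightarrow> ('a \<Rightarrow> 'a \<Rightarrow> bool) \<Rightarrow> 'a \<Rightarrow> bool" where
  "single_star_support V E s \<longleftrightarrow> support_vertex V E s \<and>
     (\<forall>t\<in>V. E s t \<longrightarrow> \<not> support_vertex V E t)"

definition is_cycle :: "'a set \<Rightarrow> ('a \<Rightarrow> 'a \<Rightarrow> bool) \<Rightarrow> 'a list \<Rightarrow> bool" where
  "is_cycle V E cs \<longleftrightarrow> length cs \<ge> 3 \<and> distinct cs \<and> set cs \<subseteq> V \<and>
     (\<forall>i < length cs - 1. E (cs ! i) (cs ! Suc i)) \<and> E (last cs) (hd cs)"

text \<open>girth at least g (vacuous for acyclic graphs, whose girth is infinite).\<close>
definition girth_at_least :: "'a set \<Rightarrow> ('a \<Rightarrow> 'a \<Rightarrow> bool) \<Rightarrow> nat \<Rightarrow> bool" where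
  "girth_at_least V E g \<longleftrightarrow> (\<forall>cs. is_cycle V E cs \<longrightarrow> length cs \<ge> g)"

definition open_packing :: "'a set \<Rightarrow> ('a \<Rightarrow> 'a \<Rightarrow> bool) \<Rightarrow> 'a set \<Rightarrow> bool" where
  "open_packing V E P \<longleftrightarrow> P \<subseteq> V \<and>
     (\<forall>u\<in>P. \<forall>v\<in>P. u \<noteq> v \<longrightarrow> \<not> (\<exists>w\<in>V. E u w \<and> E v w))"

definition maximal_open_packing :: "'a set \<Rightarrow> ('a \<Rightarrow> 'a \<Rightarrow> bool) \<Rightarrow> 'a set \<Rightarrow> bool" where
  "maximal_open_packing V E P \<longleftrightarrow> open_packing V E P \<and>
     (\<forall>Q. open_packing V E Q \<and> P \<subseteq> Q \<longrightarrow> Q = P)"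

definition open_packing_number :: "'a set \<Rightarrow> ('a \<Rightarrow> 'a \<Rightarrow> bool) \<Rightarrow> nat" where
  "open_packing_number V E = Max (card ` {P. open_packing V E P})"

definition lower_open_packing_number :: "'a set \<Rightarrow> ('a \<Rightarrow> 'a \<Rightarrow> bool) \<Rightarrow> nat" where
  "lower_open_packing_number V E = Min (card ` {P. maximal_open_packing V E P})"

definition class_U :: "'a set \<Rightarrow> ('a \<Rightarrow> 'a \<Rightarrow> bool) \<Rightarrow> bool" where
  "class_U V E \<longleftrightarrow> lower_open_packing_number V E = open_packing_number V E"

end

theory Submission imports Defs begin

definition sh :: "'a set \<Rightarrow> ('a \<Rightarrow> 'a \<Rightarrow> bool) \<Rightarrow> 'a \<Rightarrow> 'a \<Rightarrow> bool" where
  "sh V E a b \<longleftrightarrow> (\<exists>w\<in>V. E a w \<and> E b w)"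

definition nbw :: "'a set \<Rightarrow> ('a \<Rightarrow> 'a \<Rightarrow> bool) \<Rightarrow> 'a list \<Rightarrow> bool" where
  "nbw V E P \<longleftrightarrow> P \<noteq> [] \<and> set P \<subseteq> V \<and> (\<forall>i. Suc i < length P \<longrightarrow> E (P!i) (P!Suc i))
     \<and> (\<forall>i. Suc (Suc i) < length P \<longrightarrow> P!i \<noteq> P!Suc (Suc i))"

lemma g_sym: "graph V E \<Longrightarrow> E a b \<Longrightarrow> E b a" by (simp add: graph_def)
lemma g_V1: "graph V E \<Longrightarrow> E a b \<Longrightarrow> a \<in> V" by (simp add: graph_def)
lemma g_V2: "graph V E \<Longrightarrow> E a b \<Longrightarrow> b \<in> V" by (simp add: graph_def)
lemma g_irr: "graph V E \<Longrightarrow> \<not> E a a" by (simp add: graph_def)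

lemma all_nat_split: "(\<forall>i::nat. P i) = (P 0 \<and> (\<forall>i. P (Suc i)))"
  by (metis not0_implies_Suc)

lemma nbw_single[simp]: "nbw V E [a] \<longleftrightarrow> a \<in> V"
  by (simp add: nbw_def)

lemma nbw_Cons2[simp]: "nbw V E (a#b#r) \<longleftrightarrow> a \<in> V \<and> E a b \<and> nbw V E (b#r) \<and> (r \<noteq> [] \<longrightarrow> a \<noteq> hd r)"
proof -
  have 1: "(\<forall>i. Suc i < length (a#b#r) \<longrightarrow> E ((a#b#r)!i) ((a#b#r)!Suc i)) \<longleftrightarrow>
     E a b \<and> (\<forall>i. Suc i < length (b#r) \<longrightarrow> E ((b#r)!i) ((b#r)!Suc i))"
    by (subst all_nat_split) simp
  have 2: "(\<forall>i. Suc (Suc i) < length (a#b#r) \<longrightarrow> (a#b#r)!i \<noteq> (a#b#r)!Suc (Suc i)) \<longleftrightarrow>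
     (r \<noteq> [] \<longrightarrow> a \<noteq> hd r) \<and> (\<forall>i. Suc (Suc i) < length (b#r) \<longrightarrow> (b#r)!i \<noteq> (b#r)!Suc (Suc i))"
    by (subst all_nat_split) (cases r, auto)
  show ?thesis unfolding nbw_def using 1 2 by auto
qed

lemma nbw_butlast: "nbw V E P \<Longrightarrow> 2 \<le> length P \<Longrightarrow> nbw V E (butlast P)"
  unfolding nbw_def
proof (intro conjI allI impI)
  assume h: "P \<noteq> [] \<and> set P \<subseteq> V \<and> (\<forall>i. Suc i < length P \<longrightarrow> E (P ! i) (P ! Suc i)) \<and>
    (\<forall>i. Suc (Suc i) < length P \<longrightarrow> P ! i \<noteq> P ! Suc (Suc i))" and l: "2 \<le> length P"
  show "butlast P \<noteq> []" using l by (cases P) auto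
  show "set (butlast P) \<subseteq> V" using h by (meson in_set_butlastD subset_iff)
  fix i
  { assume "Suc i < length (butlast P)"
    then show "E (butlast P ! i) (butlast P ! Suc i)" using h by (simp add: nth_butlast) }
  { assume "Suc (Suc i) < length (butlast P)"
    then show "butlast P ! i \<noteq> butlast P ! Suc (Suc i)" using h by (simp add: nth_butlast) }
qed

lemma nbw_snoc: "nbw V E P \<Longrightarrow> w \<in> V \<Longrightarrow> E (last P) w \<Longrightarrow>
   (2 \<le> length P \<longrightarrow> P!(length P - 2) \<noteq> w) \<Longrightarrow> nbw V E (P @ [w])"
  unfolding nbw_def
proof (intro conjI allI impI)
  assume h: "P \<noteq> [] \<and> set P \<subseteq> V \<and> (\<forall>i. Suc i < length P \<longrightarrow> E (P ! i) (P ! Suc i)) \<and>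
    (\<forall>i. Suc (Suc i) < length P \<longrightarrow> P ! i \<noteq> P ! Suc (Suc i))" and w: "w \<in> V"
    and e: "E (last P) w" and d: "2 \<le> length P \<longrightarrow> P!(length P - 2) \<noteq> w"
  show "P @ [w] \<noteq> []" by simp
  show "set (P @ [w]) \<subseteq> V" using h w by auto
  fix i
  { assume a: "Suc i < length (P @ [w])"
    show "E ((P @ [w]) ! i) ((P @ [w]) ! Suc i)"
    proof (cases "Suc i < length P")
      case True then show ?thesis using h by (simp add: nth_append)
    next
      case False
      then have "Suc i = length P" using a by simp
      then have "i = length P - 1" by simp
      then show ?thesis using e h \<open>Suc i = length P\<close> by (simp add: nth_append last_conv_nth)
    qed }
  { assume a: "Suc (Suc i) < length (P @ [w])"
    show "(P @ [w]) ! i \<noteq> (P @ [w]) ! Suc (Suc i)"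
    proof (cases "Suc (Suc i) < length P")
      case True then show ?thesis using h by (simp add: nth_append)
    next
      case False
      then have "Suc (Suc i) = length P" using a by simp
      then show ?thesis using d by (simp add: nth_append) (metis diff_Suc_1 diff_Suc_Suc Suc_1 le_add1 add_2_eq_Suc')
    qed }
qed
lemma cycle_fun:
  assumes G: "graph V E" and gi: "girth_at_least V E g" and n3: "3 \<le> n" and ng: "n < g"
    and fV: "\<forall>i<n. f i \<in> V" and fE: "\<forall>i. Suc i < n \<longrightarrow> E (f i) (f (Suc i))"
    and cl: "E (f (n - 1)) (f 0)" and nb: "\<forall>i. Suc (Suc i) < n \<longrightarrow> f i \<noteq> f (Suc (Suc i))"
  shows False
proof (cases "inj_on f {..<n}")
  case True
  let ?ws = "map f [0..<n]"
  have "is_cycle V E ?ws"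
    unfolding is_cycle_def
  proof (intro conjI allI impI)
    show "3 \<le> length ?ws" using n3 by simp
    show "distinct ?ws" using True by (simp add: distinct_map lessThan_atLeast0)
    show "set ?ws \<subseteq> V" using fV by auto
    fix i assume "i < length ?ws - 1"
    then show "E (?ws ! i) (?ws ! Suc i)" using fE by simp
  next
    show "E (last ?ws) (hd ?ws)" using cl n3 by (simp add: last_map hd_map)
  qed
  then have "g \<le> n" using gi unfolding girth_at_least_def by fastforce
  then show False using ng by simp
next
  case False
  then obtain i j where ij: "i < n" "j < n" "i \<noteq> j" "f i = f j" unfolding inj_on_def by auto
  define Q where "Q d \<longleftrightarrow> (\<exists>i. 0 < d \<and> i + d < n \<and> f i = f (i + d))" for d
  have "\<exists>d. Q d"
  proof (cases "i < j")
    case True then show ?thesis unfolding Q_def using ij by (rule_tac x="j - i" in exI, rule_tac x=i in exI) auto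
  next
    case False then show ?thesis unfolding Q_def using ij by (rule_tac x="i - j" in exI, rule_tac x=j in exI) auto
  qed
  define d where "d = (LEAST d. Q d)"
  have Qd: "Q d" unfolding d_def using \<open>\<exists>d. Q d\<close> by (meson LeastI_ex)
  have mind: "\<And>e. Q e \<Longrightarrow> d \<le> e" unfolding d_def by (simp add: Least_le)
  obtain k where k: "0 < d" "k + d < n" "f k = f (k + d)" using Qd unfolding Q_def by auto
  have d1: "d \<noteq> 1"
  proof
    assume "d = 1"
    then have "Suc k < n" using k by simp
    then have "E (f k) (f (Suc k))" using fE by blast
    then have "E (f k) (f (k + d))" using \<open>d = 1\<close> by simp
    then show False using k G g_irr by metis
  qed
  have d2: "d \<noteq> 2"
  proof
    assume "d = 2"
    then show False using nb k by (simp add: numeral_2_eq_2)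
  qed
  let ?ws = "map (\<lambda>p. f (k + p)) [0..<d]"
  have "is_cycle V E ?ws"
    unfolding is_cycle_def
  proof (intro conjI allI impI)
    show "3 \<le> length ?ws" using k d1 d2 by simp
    show "distinct ?ws"
    proof (rule ccontr)
      assume "\<not> distinct ?ws"
      then obtain p q where pq: "p < d" "q < d" "p \<noteq> q" "f (k + p) = f (k + q)"
        by (auto simp: distinct_conv_nth)
      show False
      proof (cases "p < q")
        case True
        then have "Q (q - p)" unfolding Q_def using pq k by (rule_tac x="k + p" in exI) auto
        then show False using mind True pq by fastforce
      next
        case False
        then have "Q (p - q)" unfolding Q_def using pq k by (rule_tac x="k + q" in exI) auto
        then show False using mind False pq by fastforce
      qed
    qed
    show "set ?ws \<subseteq> V" using fV k by auto
    fix i assume "i < length ?ws - 1"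
    then have "i < d - 1" by simp
    then have "Suc (k + i) < n" using k by simp
    then have "E (f (k + i)) (f (Suc (k + i)))" using fE by blast
    moreover have "i < d" "Suc i < d" using \<open>i < d - 1\<close> by auto
    ultimately show "E (?ws ! i) (?ws ! Suc i)" by simp
  next
    have "E (f (k + (d - 1))) (f (k + d))" using fE k
      by (metis Suc_diff_1 add_Suc_right)
    then show "E (last ?ws) (hd ?ws)" using k by (simp add: last_map hd_map)
  qed
  then have "g \<le> d" using gi unfolding girth_at_least_def by fastforce
  then show False using ng k by simp
qed

lemma closed_walk:
  assumes G: "graph V E" and gi: "girth_at_least V E g" and Q: "nbw V E Q"
    and hl: "hd Q = last Q" and lg: "length Q \<le> g"
  shows "length Q = 1"
proof -
  have Q0: "Q \<noteq> []" and QV: "set Q \<subseteq> V"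
    and QE: "\<forall>i. Suc i < length Q \<longrightarrow> E (Q!i) (Q!Suc i)"
    and Qn: "\<forall>i. Suc (Suc i) < length Q \<longrightarrow> Q!i \<noteq> Q!Suc (Suc i)"
    using Q unfolding nbw_def by auto
  have hl': "Q!0 = Q!(length Q - 1)" using hl Q0 by (simp add: hd_conv_nth last_conv_nth)
  consider "length Q = 1" | "length Q = 2" | "length Q = 3" | "4 \<le> length Q"
  proof -
    have "length Q \<noteq> 0" using Q0 by simp
    then have "length Q = 1 \<or> length Q = 2 \<or> length Q = 3 \<or> 4 \<le> length Q" by linarith
    then show "(length Q = 1 \<Longrightarrow> thesis) \<Longrightarrow> (length Q = 2 \<Longrightarrow> thesis) \<Longrightarrow> (length Q = 3 \<Longrightarrow> thesis) \<Longrightarrow> (4 \<le> length Q \<Longrightarrow> thesis) \<Longrightarrow> thesis" by blast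
  qed
  then show ?thesis
  proof cases
    case 2
    then have "E (Q!0) (Q!1)" using QE by simp
    moreover have "Q!0 = Q!1" using hl' 2 by simp
    ultimately show ?thesis using G g_irr by metis
  next
    case 3
    then have "Q!0 \<noteq> Q!2" using Qn by (simp add: numeral_3_eq_3 numeral_2_eq_2)
    then show ?thesis using hl' 3 by simp
  next
    case 4
    let ?n = "length Q - 1"
    have False
    proof (rule cycle_fun[OF G gi, of ?n "\<lambda>i. Q!i"])
      show "3 \<le> ?n" using 4 by simp
      show "?n < g" using 4 lg by simp
      show "\<forall>i<?n. Q!i \<in> V" using QV by auto
      show "\<forall>i. Suc i < ?n \<longrightarrow> E (Q!i) (Q!Suc i)" using QE by auto
      show "\<forall>i. Suc (Suc i) < ?n \<longrightarrow> Q!i \<noteq> Q!Suc (Suc i)" using Qn by auto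
      have "E (Q!(?n - 1)) (Q!(Suc (?n - 1)))" using QE 4 by simp
      moreover have "Suc (?n - 1) = length Q - 1" using 4 by simp
      ultimately show "E (Q!(?n - 1)) (Q!0)" using hl' by simp
    qed
    then show ?thesis ..
  qed
qed

lemma nbwD:
  assumes "nbw V E P"
  shows "P \<noteq> []" "set P \<subseteq> V" "\<And>i. Suc i < length P \<Longrightarrow> E (P!i) (P!Suc i)"
    "\<And>i. Suc (Suc i) < length P \<Longrightarrow> P!i \<noteq> P!Suc (Suc i)"
  using assms unfolding nbw_def by auto

lemma hd_butlast2: "2 \<le> length xs \<Longrightarrow> hd (butlast xs) = hd xs"
  by (cases xs; cases "tl xs") auto

lemma len1: "length xs = 1 \<Longrightarrow> xs = [hd xs]"
  by (cases xs) auto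

lemma last_butlast2: "2 \<le> length xs \<Longrightarrow> last (butlast xs) = xs!(length xs - 2)"
proof -
  assume a: "2 \<le> length xs"
  then have "butlast xs \<noteq> []" by (cases xs) auto
  then have "last (butlast xs) = butlast xs ! (length (butlast xs) - 1)" by (simp add: last_conv_nth)
  also have "\<dots> = xs ! (length xs - 2)" using a by (simp add: nth_butlast numeral_2_eq_2)
  finally show ?thesis .
qed

lemma nbw_unique:
  assumes G: "graph V E" and gi: "girth_at_least V E g"
  shows "nbw V E P \<Longrightarrow> nbw V E Q \<Longrightarrow> hd P = hd Q \<Longrightarrow> last P = last Q \<Longrightarrow>
     length P + length Q \<le> g + 1 \<Longrightarrow> P = Q"
proof (induction "length P" arbitrary: P Q rule: less_induct)
  case less
  note P = less.prems(1) and Q = less.prems(2)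
  define p where "p = length P"
  define q where "q = length Q"
  have p1: "1 \<le> p" and q1: "1 \<le> q" using nbwD(1)[OF P] nbwD(1)[OF Q] p_def q_def by (auto simp: Suc_le_eq)
  have hdP: "hd P = P!0" and hdQ: "hd Q = Q!0" using nbwD(1)[OF P] nbwD(1)[OF Q] by (simp_all add: hd_conv_nth)
  have lP: "last P = P!(p - 1)" and lQ: "last Q = Q!(q - 1)"
    using nbwD(1)[OF P] nbwD(1)[OF Q] p_def q_def by (simp_all add: last_conv_nth)
  show "P = Q"
  proof (cases "p = 1")
    case True
    have "length Q \<le> g" using less.prems(5) True p_def by simp
    moreover have "hd Q = last Q" using less.prems(3,4) True p_def hdP lP by simp
    ultimately have "length Q = 1" using closed_walk[OF G gi Q] by simp
    then have "Q = [hd Q]" by (rule len1)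
    moreover have "P = [hd P]" by (rule len1) (use True p_def in simp)
    ultimately show ?thesis using less.prems(3) by simp
  next
    case pn1: False
    show ?thesis
    proof (cases "q = 1")
      case True
      have "length P \<le> g" using less.prems(5) True q_def by simp
      moreover have "hd P = last P" using less.prems(3,4) True q_def hdQ lQ by simp
      ultimately have "length P = 1" using closed_walk[OF G gi P] by simp
      then show ?thesis using pn1 p_def by simp
    next
      case qn1: False
      have p2: "2 \<le> p" and q2: "2 \<le> q" using p1 q1 pn1 qn1 by auto
      show ?thesis
      proof (cases "P!(p - 2) = Q!(q - 2)")
        case True
        have "butlast P = butlast Q"
        proof (rule less.hyps)
          show "length (butlast P) < length P" using p2 p_def by simp
          show "nbw V E (butlast P)" using nbw_butlast[OF P] p2 p_def by simp
          show "nbw V E (butlast Q)" using nbw_butlast[OF Q] q2 q_def by simp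
          show "hd (butlast P) = hd (butlast Q)" using p2 q2 p_def q_def less.prems(3)
            by (simp add: hd_butlast2)
          show "last (butlast P) = last (butlast Q)" using p2 q2 p_def q_def True
            by (simp add: last_butlast2)
          show "length (butlast P) + length (butlast Q) \<le> g + 1" using less.prems(5) by simp
        qed
        then have "butlast P @ [last P] = butlast Q @ [last Q]" using less.prems(4) by simp
        then show ?thesis
          by (simp only: append_butlast_last_id[OF nbwD(1)[OF P]] append_butlast_last_id[OF nbwD(1)[OF Q]])
      next
        case False
        define n where "n = p + q - 2"
        define f where "f i = (if i < p then P!i else Q!(p + q - 2 - i))" for i
        have False
        proof (rule cycle_fun[OF G gi, of n f])
          show "3 \<le> n"
          proof (rule ccontr)
            assume "\<not> 3 \<le> n"
            then have "p = 2" "q = 2" using p2 q2 n_def by auto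
            then show False using False hdP hdQ less.prems(3) by simp
          qed
          show "n < g" using less.prems(5) p_def q_def n_def p2 by simp
          show "\<forall>i<n. f i \<in> V" using nbwD(2)[OF P] nbwD(2)[OF Q] p_def q_def n_def f_def by auto
          show "\<forall>i. Suc i < n \<longrightarrow> E (f i) (f (Suc i))"
          proof (intro allI impI)
            fix i assume i: "Suc i < n"
            consider "Suc i < p" | "Suc i = p" | "p \<le> i" by linarith
            then show "E (f i) (f (Suc i))"
            proof cases
              case 1 then show ?thesis using nbwD(3)[OF P] p_def f_def by simp
            next
              case 2
              have "E (Q!(q - 2)) (Q!Suc (q - 2))" using nbwD(3)[OF Q] q2 q_def by simp
              moreover have "Suc (q - 2) = q - 1" using q2 by simp
              ultimately have "E (Q!(q - 2)) (P!(p - 1))" using less.prems(4) lP lQ by simp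
              moreover have "f i = P!(p - 1)" "f (Suc i) = Q!(q - 2)" using 2 f_def by auto
              ultimately show ?thesis using G g_sym by metis
            next
              case 3
              define j where "j = p + q - 3 - i"
              have "Suc j < q" "Suc j = p + q - 2 - i" using 3 i n_def j_def p2 q2 by auto
              then have "Suc j < length Q" using q_def by simp
              then have "E (Q!j) (Q!Suc j)" by (rule nbwD(3)[OF Q])
              moreover have "f i = Q!(Suc j)" using 3 f_def \<open>Suc j = p + q - 2 - i\<close> by auto
              moreover have "p + q - 2 - Suc i = j" using j_def by simp
              moreover have "f (Suc i) = Q!(p + q - 2 - Suc i)" using 3 f_def by simp
              ultimately have "E (f (Suc i)) (f i)" by simp
              then show ?thesis using G g_sym by metis
            qed
          qed
          show "\<forall>i. Suc (Suc i) < n \<longrightarrow> f i \<noteq> f (Suc (Suc i))"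
          proof (intro allI impI)
            fix i assume i: "Suc (Suc i) < n"
            consider "Suc (Suc i) < p" | "Suc (Suc i) = p" | "Suc i = p" | "p \<le> i" by linarith
            then show "f i \<noteq> f (Suc (Suc i))"
            proof cases
              case 1 then show ?thesis using nbwD(4)[OF P] p_def f_def by simp
            next
              case 2
              then have "f i = P!(p - 2)" "f (Suc (Suc i)) = Q!(q - 2)" using f_def by auto
              then show ?thesis using False by simp
            next
              case 3
              have q3: "3 < q" using 3 i n_def by simp
              have "Q!(q - 3) \<noteq> Q!Suc (Suc (q - 3))" using nbwD(4)[OF Q] q3 q_def by simp
              moreover have "Suc (Suc (q - 3)) = q - 1" using q3 by simp
              moreover have "f i = P!(p - 1)" "f (Suc (Suc i)) = Q!(q - 3)" using 3 f_def by auto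
              ultimately show ?thesis using less.prems(4) lP lQ by simp
            next
              case 4
              define j where "j = p + q - 4 - i"
              have "Suc (Suc j) < q" "Suc (Suc j) = p + q - 2 - i" using 4 i n_def j_def p2 q2 by auto
              then have "Suc (Suc j) < length Q" using q_def by simp
              then have "Q!j \<noteq> Q!Suc (Suc j)" by (rule nbwD(4)[OF Q])
              moreover have "f i = Q!(Suc (Suc j))" using 4 f_def \<open>Suc (Suc j) = p + q - 2 - i\<close> by auto
              moreover have "p + q - 2 - Suc (Suc i) = j" using j_def by simp
              moreover have "f (Suc (Suc i)) = Q!(p + q - 2 - Suc (Suc i))" using 4 f_def by simp
              ultimately show ?thesis by metis
            qed
          qed
          show "E (f (n - 1)) (f 0)"
          proof -
            have "f 0 = Q!0" using f_def p1 hdP hdQ less.prems(3) by simp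
            moreover have "f (n - 1) = Q!1"
            proof (cases "q = 2")
              case True
              then have "n - 1 = p - 1" using n_def by simp
              then show ?thesis using f_def p1 True less.prems(4) lP lQ by simp
            next
              case False
              then have "p \<le> n - 1" "p + q - 2 - (n - 1) = 1" using q2 n_def by auto
              then show ?thesis using f_def by simp
            qed
            moreover have "E (Q!0) (Q!1)" using nbwD(3)[OF Q] q2 q_def by simp
            ultimately show ?thesis using G g_sym by metis
          qed
        qed
        then show ?thesis ..
      qed
    qed
  qed
qed

lemma nbw_meet:
  assumes G: "graph V E" and gi: "girth_at_least V E g" and P: "nbw V E P" and Q: "nbw V E Q"
    and h: "hd P = hd Q" and eP: "E (last P) w" and eQ: "E (last Q) w"
    and l: "length P + length Q + 1 \<le> g"
  shows "P = Q \<or> Q = P @ [w, last Q] \<or> P = Q @ [w, last P] \<or> butlast P = butlast Q"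
proof -
  have wV: "w \<in> V" using G eP g_V2 by metis
  have P0: "P \<noteq> []" and Q0: "Q \<noteq> []" using nbwD(1) P Q by auto
  have U: "\<And>A B. nbw V E A \<Longrightarrow> nbw V E B \<Longrightarrow> hd A = hd B \<Longrightarrow> last A = last B \<Longrightarrow>
     length A + length B \<le> g + 1 \<Longrightarrow> A = B" using nbw_unique[OF G gi] by blast
  have bl: "\<And>A. nbw V E A \<Longrightarrow> 2 \<le> length A \<Longrightarrow> A!(length A - 2) = w \<Longrightarrow>
      nbw V E (butlast A) \<and> hd (butlast A) = hd A \<and> last (butlast A) = w \<and> length (butlast A) = length A - 1"
  proof -
    fix A assume a: "nbw V E A" "2 \<le> length A" "A!(length A - 2) = w"
    show "nbw V E (butlast A) \<and> hd (butlast A) = hd A \<and> last (butlast A) = w \<and> length (butlast A) = length A - 1"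
      using nbw_butlast[OF a(1,2)] hd_butlast2[OF a(2)] last_butlast2[OF a(2)] a(3) by simp
  qed
  have sn: "\<And>A. nbw V E A \<Longrightarrow> E (last A) w \<Longrightarrow> \<not> (2 \<le> length A \<and> A!(length A - 2) = w) \<Longrightarrow>
      nbw V E (A @ [w])"
    using nbw_snoc[of V E _ w] wV by blast
  show ?thesis
  proof (cases "2 \<le> length P \<and> P!(length P - 2) = w")
    case cP: True
    show ?thesis
    proof (cases "2 \<le> length Q \<and> Q!(length Q - 2) = w")
      case cQ: True
      have "butlast P = butlast Q"
        by (rule U) (use bl[OF P] bl[OF Q] cP cQ h l in auto)
      then show ?thesis by simp
    next
      case cQ: False
      have "butlast P = Q @ [w]"
        by (rule U) (use bl[OF P] sn[OF Q eQ cQ] cP h l Q0 in auto)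
      then have "butlast P @ [last P] = Q @ [w, last P]" by simp
      then have "P = Q @ [w, last P]" by (simp only: append_butlast_last_id[OF P0])
      then show ?thesis by simp
    qed
  next
    case cP: False
    show ?thesis
    proof (cases "2 \<le> length Q \<and> Q!(length Q - 2) = w")
      case cQ: True
      have "butlast Q = P @ [w]"
        by (rule U) (use bl[OF Q] sn[OF P eP cP] cQ h l P0 in auto)
      then have "butlast Q @ [last Q] = P @ [w, last Q]" by simp
      then have "Q = P @ [w, last Q]" by (simp only: append_butlast_last_id[OF Q0])
      then show ?thesis by simp
    next
      case cQ: False
      have "P @ [w] = Q @ [w]"
        by (rule U) (use sn[OF P eP cP] sn[OF Q eQ cQ] h l P0 Q0 in auto)
      then show ?thesis by simp
    qed
  qed
qed

lemma op_sh: "open_packing V E P \<longleftrightarrow> P \<subseteq> V \<and> (\<forall>u\<in>P. \<forall>v\<in>P. u \<noteq> v \<longrightarrow> \<not> sh V E u v)"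
  by (simp add: open_packing_def sh_def)

lemma sh_sym: "sh V E a b \<longleftrightarrow> sh V E b a"
  by (auto simp: sh_def)

lemma maximal_exists:
  assumes G: "graph V E" and T: "open_packing V E T"
  shows "\<exists>M. maximal_open_packing V E M \<and> T \<subseteq> M"
proof -
  have fV: "finite V" using G by (simp add: graph_def)
  define F where "F = {P. open_packing V E P \<and> T \<subseteq> P}"
  have Fsub: "F \<subseteq> Pow V" unfolding F_def open_packing_def by auto
  then have fF: "finite F" using fV by (meson finite_Pow_iff rev_finite_subset)
  have "T \<in> F" using T unfolding F_def by simp
  then have "F \<noteq> {}" by auto
  have "Max (card ` F) \<in> card ` F" using fF \<open>F \<noteq> {}\<close> by (simp add: Max_in)
  then obtain M where M1: "M \<in> F" "card M = Max (card ` F)" by auto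
  have M: "M \<in> F" "\<forall>Q\<in>F. card Q \<le> card M" using M1 fF by auto
  have "maximal_open_packing V E M"
    unfolding maximal_open_packing_def
  proof (intro conjI allI impI)
    show "open_packing V E M" using M unfolding F_def by simp
    fix Q assume Q: "open_packing V E Q \<and> M \<subseteq> Q"
    then have "Q \<in> F" using M unfolding F_def by auto
    then have "card Q \<le> card M" using M by simp
    moreover have "finite Q" using Q fV unfolding open_packing_def by (meson rev_finite_subset)
    ultimately show "Q = M" using Q card_seteq by blast
  qed
  then show ?thesis using M unfolding F_def by auto
qed

lemma swap:
  assumes G: "graph V E" and U: "class_U V E" and SB: "open_packing V E (S \<union> B)"
    and A: "open_packing V E A" and cAB: "card B < card A"
    and h1: "\<forall>a\<in>A. \<exists>b\<in>B. a \<noteq> b \<and> sh V E a b"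
    and h3: "\<forall>a\<in>A. \<forall>m\<in>V. m \<noteq> a \<and> sh V E a m \<longrightarrow> m \<in> B \<or> (\<exists>b\<in>B. m \<noteq> b \<and> sh V E m b) \<or> (\<exists>t\<in>S. m \<noteq> t \<and> sh V E m t)"
  shows False
proof -
  have fV: "finite V" using G by (simp add: graph_def)
  obtain M where M: "maximal_open_packing V E M" "S \<union> B \<subseteq> M" using maximal_exists[OF G SB] by blast
  have Mop: "open_packing V E M" using M unfolding maximal_open_packing_def by simp
  have MV: "M \<subseteq> V" and Msh: "\<forall>u\<in>M. \<forall>v\<in>M. u \<noteq> v \<longrightarrow> \<not> sh V E u v" using Mop unfolding op_sh by auto
  have AV: "A \<subseteq> V" and Ash: "\<forall>u\<in>A. \<forall>v\<in>A. u \<noteq> v \<longrightarrow> \<not> sh V E u v" using A unfolding op_sh by auto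
  have fM: "finite M" using MV fV by (meson rev_finite_subset)
  have fA: "finite A" using AV fV by (meson rev_finite_subset)
  have BM: "B \<subseteq> M" "S \<subseteq> M" using M by auto
  define M' where "M' = (M - B) \<union> A"
  have disj: "(M - B) \<inter> A = {}"
  proof (rule ccontr)
    assume "(M - B) \<inter> A \<noteq> {}"
    then obtain a where a: "a \<in> M" "a \<notin> B" "a \<in> A" by auto
    then obtain b where "b \<in> B" "a \<noteq> b" "sh V E a b" using h1 by blast
    then show False using Msh a BM by blast
  qed
  have opM': "open_packing V E M'"
    unfolding op_sh
  proof (intro conjI ballI impI)
    show "M' \<subseteq> V" using MV AV M'_def by auto
    have key: "\<not> sh V E a m" if a: "a \<in> A" and m: "m \<in> M - B" and am: "a \<noteq> m" for a m
    proof
      assume sam: "sh V E a m"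
      have "m \<in> V" using m MV by auto
      then have "m \<in> B \<or> (\<exists>b\<in>B. m \<noteq> b \<and> sh V E m b) \<or> (\<exists>t\<in>S. m \<noteq> t \<and> sh V E m t)"
        using h3 a am sam \<open>m \<in> V\<close> by (metis (no_types, lifting))
      moreover have "m \<in> M" "m \<notin> B" using m by auto
      ultimately show False using Msh BM by blast
    qed
    fix u v assume u: "u \<in> M'" and v: "v \<in> M'" and uv: "u \<noteq> v"
    have uu: "u \<in> M - B \<or> u \<in> A" and vv: "v \<in> M - B \<or> v \<in> A" using u v unfolding M'_def by auto
    show "\<not> sh V E u v"
    proof (cases "u \<in> A")
      case True
      show ?thesis
      proof (cases "v \<in> A")
        case True then show ?thesis using \<open>u \<in> A\<close> Ash uv by blast
      next
        case False then show ?thesis using vv key[of u v] \<open>u \<in> A\<close> uv by blast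
      qed
    next
      case False
      show ?thesis
      proof (cases "v \<in> A")
        case True
        then have "\<not> sh V E v u" using key[of v u] uu False uv by blast
        then show ?thesis using sh_sym by metis
      next
        case False then show ?thesis using uu vv \<open>u \<notin> A\<close> Msh uv by blast
      qed
    qed
  qed
  have "card M' = card (M - B) + card A" unfolding M'_def using disj fM fA by (simp add: card_Un_disjoint)
  also have "card (M - B) = card M - card B" using BM fM by (simp add: card_Diff_subset finite_subset)
  finally have eq: "card M' = card M - card B + card A" .
  have "card B \<le> card M" using BM fM by (simp add: card_mono)
  then have cM': "card M < card M'" using eq cAB by linarith
  have fin1: "finite (card ` {P. open_packing V E P})"
  proof -
    have "{P. open_packing V E P} \<subseteq> Pow V" unfolding open_packing_def by auto
    then show ?thesis using fV by (meson finite_Pow_iff finite_imageI rev_finite_subset)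
  qed
  have fin2: "finite (card ` {P. maximal_open_packing V E P})"
  proof -
    have "{P. maximal_open_packing V E P} \<subseteq> Pow V" unfolding maximal_open_packing_def open_packing_def by auto
    then show ?thesis using fV by (meson finite_Pow_iff finite_imageI rev_finite_subset)
  qed
  have "card M' \<le> open_packing_number V E"
    unfolding open_packing_number_def using fin1 opM' by (simp add: Max_ge)
  moreover have "lower_open_packing_number V E \<le> card M"
    unfolding lower_open_packing_number_def using fin2 M(1) by (simp add: Min_le)
  ultimately show False using U cM' unfolding class_U_def by simp
qed

lemma leaf_nbr:
  assumes G: "graph V E" and l: "leaf V E u" and a: "E u a" and b: "E u b"
  shows "a = b"
proof -
  have "card (nbhd V E u) = 1" using l unfolding leaf_def degree_def by simp
  then obtain c where c: "nbhd V E u = {c}" by (meson card_1_singletonE)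
  have "a \<in> nbhd V E u" using a g_V2[OF G a] unfolding nbhd_def by simp
  moreover have "b \<in> nbhd V E u" using b g_V2[OF G b] unfolding nbhd_def by simp
  ultimately show ?thesis using c by simp
qed

lemma nonleaf_other:
  assumes G: "graph V E" and uV: "u \<in> V" and nl: "\<not> leaf V E u" and a: "E u a"
  shows "\<exists>b. E u b \<and> b \<noteq> a"
proof (rule ccontr)
  assume h: "\<not> (\<exists>b. E u b \<and> b \<noteq> a)"
  have "nbhd V E u \<subseteq> {a}" unfolding nbhd_def using h by blast
  moreover have "a \<in> nbhd V E u" unfolding nbhd_def using a g_V2[OF G a] by blast
  ultimately have "nbhd V E u = {a}" by blast
  then have "degree V E u = 1" unfolding degree_def by simp
  then have "leaf V E u" using uV unfolding leaf_def by blast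
  then show False using nl by simp
qed

lemma case1:
  assumes G: "graph V E" and U: "class_U V E" and l: "leaf V E l" and sl: "E s l"
    and sw: "E s w" and ww': "E w w'" and w's: "w' \<noteq> s" and w'u: "E w' u" and u: "leaf V E u"
  shows False
proof -
  have ls: "E l s" and ws: "E w s" and uw': "E u w'" and w'w: "E w' w"
    using g_sym[OF G sl] g_sym[OF G sw] g_sym[OF G w'u] g_sym[OF G ww'] .
  have Nl: "\<And>c. E l c \<Longrightarrow> c = s" using leaf_nbr[OF G l] ls by blast
  have Nu: "\<And>c. E u c \<Longrightarrow> c = w'" using leaf_nbr[OF G u] uw' by blast
  have lu: "l \<noteq> u" using Nl[of w'] uw' w's by blast
  have lw: "l \<noteq> w" using Nl[of w'] ww' w's by blast
  have uw: "u \<noteq> w" using Nu[of s] ws w's by blast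
  have sV: "s \<in> V" and w'V: "w' \<in> V" and wV: "w \<in> V" and lV: "l \<in> V" and uV: "u \<in> V"
    using g_V1[OF G sl] g_V1[OF G w'u] g_V2[OF G sw] g_V2[OF G sl] g_V2[OF G w'u] .
  show False
  proof (rule swap[OF G U, of "{}" "{w}" "{l, u}"])
    show "open_packing V E ({} \<union> {w})" using wV unfolding open_packing_def by simp
    have nlu: "\<not> sh V E l u"
    proof
      assume "sh V E l u"
      then obtain c where "E l c" "E u c" unfolding sh_def by blast
      then show False using Nl Nu w's by blast
    qed
    show "open_packing V E {l, u}"
      unfolding op_sh using lV uV nlu sh_sym[of V E l u] by blast
    show "card {w} < card {l, u}" using lu by simp
    have "sh V E l w" unfolding sh_def using ls ws sV by blast
    moreover have "sh V E u w" unfolding sh_def using uw' ww' w'V by blast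
    ultimately show "\<forall>a\<in>{l, u}. \<exists>b\<in>{w}. a \<noteq> b \<and> sh V E a b"
      using lw uw by blast
    show "\<forall>a\<in>{l, u}. \<forall>m\<in>V. m \<noteq> a \<and> sh V E a m \<longrightarrow> m \<in> {w} \<or> (\<exists>b\<in>{w}. m \<noteq> b \<and> sh V E m b) \<or>
        (\<exists>t\<in>{}. m \<noteq> t \<and> sh V E m t)"
    proof (intro ballI impI)
      fix a m assume a: "a \<in> {l, u}" and m: "m \<in> V" and h: "m \<noteq> a \<and> sh V E a m"
      then obtain c where c: "E a c" "E m c" unfolding sh_def by blast
      have "E m s \<or> E m w'"
      proof (cases "a = l")
        case True then show ?thesis using c Nl by blast
      next
        case False then have "a = u" using a by blast
        then show ?thesis using c Nu by blast
      qed
      then have "m = w \<or> (m \<noteq> w \<and> sh V E m w)"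
        unfolding sh_def using ws ww' sV w'V by blast
      then show "m \<in> {w} \<or> (\<exists>b\<in>{w}. m \<noteq> b \<and> sh V E m b) \<or> (\<exists>t\<in>{}. m \<noteq> t \<and> sh V E m t)"
        by blast
    qed
  qed
qed

lemma second_nonleaf:
  assumes G: "graph V E" and nss: "\<forall>w. E s w \<longrightarrow> \<not> support_vertex V E w"
    and sw: "E s w" and ww': "E w w'"
  shows "\<not> leaf V E w'"
proof
  assume "leaf V E w'"
  then have "support_vertex V E w" unfolding support_vertex_def using g_V1[OF G ww'] g_V2[OF G ww'] ww' by blast
  then show False using nss sw by blast
qed

lemma case2a:
  assumes G: "graph V E" and gi: "girth_at_least V E 15" and U: "class_U V E"
    and nss: "\<forall>w. E s w \<longrightarrow> \<not> support_vertex V E w"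
    and nc1: "\<forall>w w' u. E s w \<longrightarrow> E w w' \<longrightarrow> w' \<noteq> s \<longrightarrow> E w' u \<longrightarrow> \<not> leaf V E u"
    and sx: "E s x" and xx': "E x x'" and x's: "x' \<noteq> s" and x'z: "E x' z" and zx: "z \<noteq> x"
    and zv: "E z v" and vx': "v \<noteq> x'" and simpv: "\<forall>c. E v c \<longrightarrow> c \<noteq> z \<longrightarrow> leaf V E c"
  shows False
proof -
  define Sec where "Sec = {w'. \<exists>w. E s w \<and> w \<noteq> x \<and> E w w' \<and> w' \<noteq> s}"
  define T1 where "T1 = (\<lambda>w'. SOME t. \<exists>c. E w' c \<and> \<not> E c s \<and> E c t \<and> t \<noteq> w')"
  define S where "S = T1 ` Sec"
  have sV: "s \<in> V" using g_V1[OF G sx] .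
  have T1spec: "\<exists>c. E w' c \<and> \<not> E c s \<and> E c (T1 w') \<and> T1 w' \<noteq> w'" if w': "w' \<in> Sec" for w'
  proof -
    obtain w where w: "E s w" "w \<noteq> x" "E w w'" "w' \<noteq> s" using w' unfolding Sec_def by blast
    have w'V: "w' \<in> V" using g_V2[OF G w(3)] .
    have "\<not> leaf V E w'" using second_nonleaf[OF G nss w(1) w(3)] .
    then obtain c where c: "E w' c" "c \<noteq> w" using nonleaf_other[OF G w'V _ g_sym[OF G w(3)]] by blast
    have ncs: "\<not> E c s"
    proof
      assume cs: "E c s"
      have "nbw V E [s, w, w', c, s]" using sV w c cs g_V2[OF G w(1)] w'V g_V2[OF G c(1)] by simp
      then have "length [s, w, w', c, s] = 1" by (rule closed_walk[OF G gi]) simp_all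
      then show False by simp
    qed
    have "\<not> leaf V E c" using nc1 w c by blast
    then obtain t where t: "E c t" "t \<noteq> w'" using nonleaf_other[OF G g_V2[OF G c(1)] _ g_sym[OF G c(1)]] by blast
    have "\<exists>t. \<exists>c. E w' c \<and> \<not> E c s \<and> E c t \<and> t \<noteq> w'" using c ncs t by blast
    then show ?thesis unfolding T1_def by (rule someI_ex)
  qed
  have Swalk: "\<exists>w w' c. t = T1 w' \<and> w' \<in> Sec \<and> w \<noteq> x \<and> nbw V E [s, w, w', c, t]" if t: "t \<in> S" for t
  proof -
    obtain w' where w': "w' \<in> Sec" "t = T1 w'" using t unfolding S_def by blast
    obtain w where w: "E s w" "w \<noteq> x" "E w w'" "w' \<noteq> s" using w' unfolding Sec_def by blast
    obtain c where c: "E w' c" "\<not> E c s" "E c t" "t \<noteq> w'" using T1spec[OF w'(1)] w'(2) by blast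
    have "w \<noteq> c" using c(2) g_sym[OF G w(1)] by blast
    then have "nbw V E [s, w, w', c, t]" using sV w c g_V2[OF G w(1)] g_V2[OF G w(3)] g_V2[OF G c(1)] g_V2[OF G c(3)] by simp
    then show ?thesis using w' w by blast
  qed
  have xV: "x \<in> V" and x'V: "x' \<in> V" and zV: "z \<in> V" and vV: "v \<in> V"
    using g_V2[OF G sx] g_V2[OF G xx'] g_V2[OF G x'z] g_V2[OF G zv] .
  have Pv: "nbw V E [s, x, x', z, v]" using sV xV x'V zV vV sx xx' x'z zv x's zx vx' by simp
  have Px': "nbw V E [s, x, x']" using sV xV x'V sx xx' x's by simp
  have Ps: "nbw V E [s]" using sV by simp
  have vs: "v \<noteq> s"
  proof
    assume "v = s"
    then have "length [s, x, x', z, v] = 1" using closed_walk[OF G gi Pv] by simp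
    then show False by simp
  qed
  have SV: "S \<subseteq> V" using Swalk unfolding nbw_def by fastforce
  show False
  proof (rule swap[OF G U, of S "{x'}" "{v, s}"])
    show "open_packing V E (S \<union> {x'})"
      unfolding op_sh
    proof (intro conjI ballI impI)
      show "S \<union> {x'} \<subseteq> V" using SV x'V by blast
      have tt: "\<not> sh V E t1 t2" if t1S: "t1 \<in> S" and t2S: "t2 \<in> S" and ne: "t1 \<noteq> t2" for t1 t2
      proof
        assume "sh V E t1 t2"
        then obtain c0 where c0: "E t1 c0" "E t2 c0" unfolding sh_def by blast
        obtain w1 w1' c1 where 1: "t1 = T1 w1'" "nbw V E [s, w1, w1', c1, t1]" using Swalk[OF t1S] by blast
        obtain w2 w2' c2 where 2: "t2 = T1 w2'" "nbw V E [s, w2, w2', c2, t2]" using Swalk[OF t2S] by blast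
        have "[s, w1, w1', c1, t1] = [s, w2, w2', c2, t2] \<or> [s, w2, w2', c2, t2] = [s, w1, w1', c1, t1] @ [c0, t2]
          \<or> [s, w1, w1', c1, t1] = [s, w2, w2', c2, t2] @ [c0, t1] \<or> butlast [s, w1, w1', c1, t1] = butlast [s, w2, w2', c2, t2]"
          using nbw_meet[OF G gi 1(2) 2(2)] c0 by simp
        then show False using 1(1) 2(1) ne by auto
      qed
      have tx: "\<not> sh V E t x'" if tS: "t \<in> S" for t
      proof
        assume "sh V E t x'"
        then obtain c0 where c0: "E t c0" "E x' c0" unfolding sh_def by blast
        obtain w w' c where 1: "w \<noteq> x" "nbw V E [s, w, w', c, t]" using Swalk[OF tS] by blast
        have "[s, w, w', c, t] = [s, x, x'] \<or> [s, x, x'] = [s, w, w', c, t] @ [c0, x']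
          \<or> [s, w, w', c, t] = [s, x, x'] @ [c0, t] \<or> butlast [s, w, w', c, t] = butlast [s, x, x']"
          using nbw_meet[OF G gi 1(2) Px'] c0 by simp
        then show False using 1(1) by auto
      qed
      fix a b assume a: "a \<in> S \<union> {x'}" and b: "b \<in> S \<union> {x'}" and ab: "a \<noteq> b"
      show "\<not> sh V E a b"
      proof (cases "a = x'")
        case True
        then have "b \<in> S" using b ab by blast
        then show ?thesis using tx True sh_sym[of V E a b] by blast
      next
        case False
        then have aS: "a \<in> S" using a by blast
        show ?thesis
        proof (cases "b = x'")
          case True then show ?thesis using tx aS by blast
        next
          case False then show ?thesis using tt aS b ab by blast
        qed
      qed
    qed
    have nvs: "\<not> sh V E v s"
    proof
      assume "sh V E v s"
      then obtain c0 where c0: "E v c0" "E s c0" unfolding sh_def by blast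
      have "[s, x, x', z, v] = [s] \<or> [s] = [s, x, x', z, v] @ [c0, s]
          \<or> [s, x, x', z, v] = [s] @ [c0, v] \<or> butlast [s, x, x', z, v] = butlast [s]"
        using nbw_meet[OF G gi Pv Ps] c0 by simp
      then show False by simp
    qed
    show "open_packing V E {v, s}"
      unfolding op_sh using vV sV nvs sh_sym[of V E v s] by blast
    show "card {x'} < card {v, s}" using vs by simp
    have "sh V E v x'" unfolding sh_def using g_sym[OF G zv] x'z zV by blast
    moreover have "sh V E s x'" unfolding sh_def using sx g_sym[OF G xx'] xV by blast
    ultimately show "\<forall>a\<in>{v, s}. \<exists>b\<in>{x'}. a \<noteq> b \<and> sh V E a b" using vx' x's by auto
    show "\<forall>a\<in>{v, s}. \<forall>m\<in>V. m \<noteq> a \<and> sh V E a m \<longrightarrow> m \<in> {x'} \<or> (\<exists>b\<in>{x'}. m \<noteq> b \<and> sh V E m b) \<or>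
        (\<exists>t\<in>S. m \<noteq> t \<and> sh V E m t)"
    proof (intro ballI impI)
      fix a m assume a: "a \<in> {v, s}" and m: "m \<in> V" and h: "m \<noteq> a \<and> sh V E a m"
      then obtain c where c: "E a c" "E m c" unfolding sh_def by blast
      show "m \<in> {x'} \<or> (\<exists>b\<in>{x'}. m \<noteq> b \<and> sh V E m b) \<or> (\<exists>t\<in>S. m \<noteq> t \<and> sh V E m t)"
      proof (cases "a = v")
        case True
        show ?thesis
        proof (cases "c = z")
          case True
          then have "m = x' \<or> (m \<noteq> x' \<and> sh V E m x')" unfolding sh_def using c x'z zV by blast
          then show ?thesis by blast
        next
          case False
          then have "leaf V E c" using simpv c \<open>a = v\<close> by blast
          then have "m = v" using leaf_nbr[OF G _ g_sym[OF G c(2)] g_sym[OF G c(1)]] \<open>a = v\<close> by blast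
          then show ?thesis using h \<open>a = v\<close> by blast
        qed
      next
        case False
        then have as: "a = s" using a by blast
        show ?thesis
        proof (cases "c = x")
          case True
          then have "m = x' \<or> (m \<noteq> x' \<and> sh V E m x')" unfolding sh_def using c g_sym[OF G xx'] xV by blast
          then show ?thesis by blast
        next
          case False
          have "m \<noteq> s" using h as by blast
          then have mS: "m \<in> Sec" unfolding Sec_def using c as False g_sym[OF G c(2)] by blast
          then obtain c' where c': "E m c'" "E c' (T1 m)" "T1 m \<noteq> m" using T1spec by blast
          have "T1 m \<in> S" using mS unfolding S_def by blast
          moreover have "sh V E m (T1 m)" unfolding sh_def using c' g_sym[OF G c'(2)] g_V2[OF G c'(1)] by blast
          ultimately show ?thesis using c'(3) by metis
        qed
      qed
    qed
  qed
qed

definition Third :: "('a \<Rightarrow> 'a \<Rightarrow> bool) \<Rightarrow> 'a \<Rightarrow> 'a \<Rightarrow> 'a set" where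
  "Third E p q = {v. \<exists>z. E p z \<and> z \<noteq> q \<and> E z v \<and> v \<noteq> p}"

definition T2 :: "('a \<Rightarrow> 'a \<Rightarrow> bool) \<Rightarrow> 'a \<Rightarrow> 'a \<Rightarrow> 'a" where
  "T2 E p v = (SOME t. \<exists>u. E v u \<and> \<not> E u p \<and> E u t \<and> t \<noteq> v)"

lemma branch:
  assumes G: "graph V E" and gi: "girth_at_least V E 15"
    and sx: "E s x" and xx': "E x x'" and x's: "x' \<noteq> s"
    and n2x: "\<forall>z v. E x' z \<longrightarrow> z \<noteq> x \<longrightarrow> E z v \<longrightarrow> v \<noteq> x' \<longrightarrow> (\<exists>u. E v u \<and> u \<noteq> z \<and> \<not> leaf V E u)"
    and v: "v \<in> Third E x' x"
  shows "\<exists>z u. E v u \<and> E u (T2 E x' v) \<and> T2 E x' v \<noteq> v \<and> nbw V E [s, x, x', z, v, u, T2 E x' v]"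
proof -
  obtain z where z: "E x' z" "z \<noteq> x" "E z v" "v \<noteq> x'" using v unfolding Third_def by blast
  obtain u where u: "E v u" "u \<noteq> z" "\<not> leaf V E u" using n2x z by blast
  have sV: "s \<in> V" and xV: "x \<in> V" and x'V: "x' \<in> V" and zV: "z \<in> V" and vV: "v \<in> V" and uV: "u \<in> V"
    using g_V1[OF G sx] g_V2[OF G sx] g_V2[OF G xx'] g_V2[OF G z(1)] g_V2[OF G z(3)] g_V2[OF G u(1)] .
  have nux: "\<not> E u x'"
  proof
    assume ux: "E u x'"
    have "nbw V E [s, x, x', z, v, u, x']" using sV xV x'V zV vV uV sx xx' z u ux x's by simp
    moreover have "nbw V E [s, x, x']" using sV xV x'V sx xx' x's by simp
    ultimately have "[s, x, x', z, v, u, x'] = [s, x, x']" by (rule nbw_unique[OF G gi]) simp_all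
    then show False by simp
  qed
  obtain t where t: "E u t" "t \<noteq> v" using nonleaf_other[OF G uV u(3) g_sym[OF G u(1)]] by blast
  have "\<exists>t. \<exists>u. E v u \<and> \<not> E u x' \<and> E u t \<and> t \<noteq> v" using u nux t by blast
  then have "\<exists>u. E v u \<and> \<not> E u x' \<and> E u (T2 E x' v) \<and> T2 E x' v \<noteq> v" unfolding T2_def by (rule someI_ex)
  then obtain u' where u': "E v u'" "\<not> E u' x'" "E u' (T2 E x' v)" "T2 E x' v \<noteq> v" by blast
  have "z \<noteq> u'" using u'(2) z(1) g_sym[OF G z(1)] by blast
  then have "nbw V E [s, x, x', z, v, u', T2 E x' v]"
    using sV xV x'V zV vV sx xx' z u' x's g_V2[OF G u'(1)] g_V2[OF G u'(3)] by simp
  then show ?thesis using u' by blast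
qed

lemma branch_h3:
  assumes G: "graph V E" and gi: "girth_at_least V E 15"
    and sx: "E s x" and xx': "E x x'" and x's: "x' \<noteq> s"
    and n2x: "\<forall>z v. E x' z \<longrightarrow> z \<noteq> x \<longrightarrow> E z v \<longrightarrow> v \<noteq> x' \<longrightarrow> (\<exists>u. E v u \<and> u \<noteq> z \<and> \<not> leaf V E u)"
    and m: "m \<noteq> x'" and sm: "sh V E x' m" and TS: "T2 E x' ` Third E x' x \<subseteq> S"
  shows "m \<in> {s} \<or> (\<exists>b\<in>{s}. m \<noteq> b \<and> sh V E m b) \<or> (\<exists>t\<in>S. m \<noteq> t \<and> sh V E m t)"
proof -
  obtain c where c: "E x' c" "E m c" using sm unfolding sh_def by blast
  show ?thesis
  proof (cases "c = x")
    case True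
    then have "m = s \<or> (m \<noteq> s \<and> sh V E m s)" unfolding sh_def using c sx g_V2[OF G sx] by blast
    then show ?thesis by blast
  next
    case False
    then have mT: "m \<in> Third E x' x" unfolding Third_def using c m g_sym[OF G c(2)] by blast
    obtain z u where zu: "E m u" "E u (T2 E x' m)" "T2 E x' m \<noteq> m"
      using branch[OF G gi sx xx' x's n2x mT] by blast
    have "T2 E x' m \<in> S" using TS mT by blast
    moreover have "sh V E m (T2 E x' m)" unfolding sh_def using zu g_sym[OF G zu(2)] g_V2[OF G zu(1)] by blast
    ultimately show ?thesis using zu(3) by metis
  qed
qed

lemma case3:
  assumes G: "graph V E" and gi: "girth_at_least V E 15" and U: "class_U V E"
    and sx: "E s x" and xx': "E x x'" and x's: "x' \<noteq> s"
    and sy: "E s y" and yy': "E y y'" and y's: "y' \<noteq> s" and xy: "x \<noteq> y"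
    and n2x: "\<forall>z v. E x' z \<longrightarrow> z \<noteq> x \<longrightarrow> E z v \<longrightarrow> v \<noteq> x' \<longrightarrow> (\<exists>u. E v u \<and> u \<noteq> z \<and> \<not> leaf V E u)"
    and n2y: "\<forall>z v. E y' z \<longrightarrow> z \<noteq> y \<longrightarrow> E z v \<longrightarrow> v \<noteq> y' \<longrightarrow> (\<exists>u. E v u \<and> u \<noteq> z \<and> \<not> leaf V E u)"
  shows False
proof -
  define S where "S = T2 E x' ` Third E x' x \<union> T2 E y' ` Third E y' y"
  have sV: "s \<in> V" and xV: "x \<in> V" and x'V: "x' \<in> V" and yV: "y \<in> V" and y'V: "y' \<in> V"
    using g_V1[OF G sx] g_V2[OF G sx] g_V2[OF G xx'] g_V2[OF G sy] g_V2[OF G yy'] .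
  have Swalk: "\<exists>b b' z v u. ((b = x \<and> b' = x') \<or> (b = y \<and> b' = y')) \<and> t = T2 E b' v \<and> nbw V E [s, b, b', z, v, u, t]"
    if tS: "t \<in> S" for t
  proof -
    { assume "t \<in> T2 E x' ` Third E x' x"
      then obtain v where v: "v \<in> Third E x' x" "t = T2 E x' v" by blast
      then have ?thesis using branch[OF G gi sx xx' x's n2x v(1)] by blast }
    moreover
    { assume "t \<in> T2 E y' ` Third E y' y"
      then obtain v where v: "v \<in> Third E y' y" "t = T2 E y' v" by blast
      then have ?thesis using branch[OF G gi sy yy' y's n2y v(1)] by blast }
    ultimately show ?thesis using tS unfolding S_def by blast
  qed
  have SV: "S \<subseteq> V" using Swalk unfolding nbw_def by fastforce
  have Ps: "nbw V E [s]" using sV by simp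
  have Px: "nbw V E [s, x, x']" using sV xV x'V sx xx' x's by simp
  have Py: "nbw V E [s, y, y']" using sV yV y'V sy yy' y's by simp
  show False
  proof (rule swap[OF G U, of S "{s}" "{x', y'}"])
    show "open_packing V E (S \<union> {s})"
      unfolding op_sh
    proof (intro conjI ballI impI)
      show "S \<union> {s} \<subseteq> V" using SV sV by blast
      have tt: "\<not> sh V E t1 t2" if t1S: "t1 \<in> S" and t2S: "t2 \<in> S" and ne: "t1 \<noteq> t2" for t1 t2
      proof
        assume "sh V E t1 t2"
        then obtain c0 where c0: "E t1 c0" "E t2 c0" unfolding sh_def by blast
        obtain b1 b1' z1 v1 u1 where 1: "(b1 = x \<and> b1' = x') \<or> (b1 = y \<and> b1' = y')" "t1 = T2 E b1' v1"
          "nbw V E [s, b1, b1', z1, v1, u1, t1]" using Swalk[OF t1S] by blast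
        obtain b2 b2' z2 v2 u2 where 2: "(b2 = x \<and> b2' = x') \<or> (b2 = y \<and> b2' = y')" "t2 = T2 E b2' v2"
          "nbw V E [s, b2, b2', z2, v2, u2, t2]" using Swalk[OF t2S] by blast
        have "[s, b1, b1', z1, v1, u1, t1] = [s, b2, b2', z2, v2, u2, t2]
          \<or> [s, b2, b2', z2, v2, u2, t2] = [s, b1, b1', z1, v1, u1, t1] @ [c0, t2]
          \<or> [s, b1, b1', z1, v1, u1, t1] = [s, b2, b2', z2, v2, u2, t2] @ [c0, t1]
          \<or> butlast [s, b1, b1', z1, v1, u1, t1] = butlast [s, b2, b2', z2, v2, u2, t2]"
          using nbw_meet[OF G gi 1(3) 2(3)] c0 by simp
        then show False using 1(2) 2(2) ne by auto
      qed
      have ts: "\<not> sh V E t s" if tS: "t \<in> S" for t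
      proof
        assume "sh V E t s"
        then obtain c0 where c0: "E t c0" "E s c0" unfolding sh_def by blast
        obtain b b' z v u where 1: "nbw V E [s, b, b', z, v, u, t]" using Swalk[OF tS] by blast
        have "[s, b, b', z, v, u, t] = [s] \<or> [s] = [s, b, b', z, v, u, t] @ [c0, s]
          \<or> [s, b, b', z, v, u, t] = [s] @ [c0, t] \<or> butlast [s, b, b', z, v, u, t] = butlast [s]"
          using nbw_meet[OF G gi 1 Ps] c0 by simp
        then show False by simp
      qed
      fix a b assume a: "a \<in> S \<union> {s}" and b: "b \<in> S \<union> {s}" and ab: "a \<noteq> b"
      show "\<not> sh V E a b"
      proof (cases "a = s")
        case True
        then have "b \<in> S" using b ab by blast
        then show ?thesis using ts True sh_sym[of V E a b] by blast
      next
        case False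
        then have aS: "a \<in> S" using a by blast
        show ?thesis
        proof (cases "b = s")
          case True then show ?thesis using ts aS by blast
        next
          case False then show ?thesis using tt aS b ab by blast
        qed
      qed
    qed
    have nxy: "\<not> sh V E x' y'"
    proof
      assume "sh V E x' y'"
      then obtain c0 where c0: "E x' c0" "E y' c0" unfolding sh_def by blast
      have "[s, x, x'] = [s, y, y'] \<or> [s, y, y'] = [s, x, x'] @ [c0, y']
          \<or> [s, x, x'] = [s, y, y'] @ [c0, x'] \<or> butlast [s, x, x'] = butlast [s, y, y']"
        using nbw_meet[OF G gi Px Py] c0 by simp
      then show False using xy by simp
    qed
    have x'y': "x' \<noteq> y'"
    proof
      assume "x' = y'"
      then have "[s, x, x'] = [s, y, y']" by (intro nbw_unique[OF G gi Px Py]) simp_all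
      then show False using xy by simp
    qed
    show "open_packing V E {x', y'}"
      unfolding op_sh using x'V y'V nxy sh_sym[of V E x' y'] by blast
    show "card {s} < card {x', y'}" using x'y' by simp
    have "sh V E x' s" unfolding sh_def using sx g_sym[OF G xx'] xV by blast
    moreover have "sh V E y' s" unfolding sh_def using sy g_sym[OF G yy'] yV by blast
    ultimately show "\<forall>a\<in>{x', y'}. \<exists>b\<in>{s}. a \<noteq> b \<and> sh V E a b" using x's y's by auto
    show "\<forall>a\<in>{x', y'}. \<forall>m\<in>V. m \<noteq> a \<and> sh V E a m \<longrightarrow> m \<in> {s} \<or> (\<exists>b\<in>{s}. m \<noteq> b \<and> sh V E m b) \<or>
        (\<exists>t\<in>S. m \<noteq> t \<and> sh V E m t)"
    proof (intro ballI impI)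
      fix a m assume a: "a \<in> {x', y'}" and m: "m \<in> V" and h: "m \<noteq> a \<and> sh V E a m"
      have TSx: "T2 E x' ` Third E x' x \<subseteq> S" and TSy: "T2 E y' ` Third E y' y \<subseteq> S" unfolding S_def by blast+
      show "m \<in> {s} \<or> (\<exists>b\<in>{s}. m \<noteq> b \<and> sh V E m b) \<or> (\<exists>t\<in>S. m \<noteq> t \<and> sh V E m t)"
      proof (cases "a = x'")
        case True
        then show ?thesis using branch_h3[OF G gi sx xx' x's n2x _ _ TSx] h by blast
      next
        case False
        then have "a = y'" using a by blast
        then show ?thesis using branch_h3[OF G gi sy yy' y's n2y _ _ TSy] h by blast
      qed
    qed
  qed
qed

theorem lemma5:
  fixes V :: "'a set" and E :: "'a \<Rightarrow> 'a \<Rightarrow> bool" and s :: 'a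
  assumes "graph V E"
    and "connected V E"
    and "min_degree V E = 1"
    and "girth_at_least V E 15"
    and "class_U V E"
    and "single_star_support V E s"
  shows "card {u \<in> nbhd V E s. \<not> leaf V E u} \<le> 1"
proof (rule ccontr)
  note G = assms(1) and gi = assms(4) and U = assms(5)
  assume c: "\<not> card {u \<in> nbhd V E s. \<not> leaf V E u} \<le> 1"
  have fV: "finite V" using G by (simp add: graph_def)
  have fin: "finite {u \<in> nbhd V E s. \<not> leaf V E u}"
    by (rule finite_subset[OF _ fV]) (auto simp: nbhd_def)
  obtain x y where xy: "x \<in> {u \<in> nbhd V E s. \<not> leaf V E u}" "y \<in> {u \<in> nbhd V E s. \<not> leaf V E u}" "x \<noteq> y"
    using c fin card_le_Suc0_iff_eq[OF fin] by auto
  have sx: "E s x" and xV: "x \<in> V" and xnl: "\<not> leaf V E x" using xy(1) unfolding nbhd_def by auto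
  have sy: "E s y" and yV: "y \<in> V" and ynl: "\<not> leaf V E y" using xy(2) unfolding nbhd_def by auto
  obtain l where l: "E s l" "leaf V E l" using assms(6) unfolding single_star_support_def support_vertex_def by blast
  have nss: "\<forall>w. E s w \<longrightarrow> \<not> support_vertex V E w"
    using assms(6) g_V2[OF G] unfolding single_star_support_def by blast
  obtain x' where x': "E x x'" "x' \<noteq> s" using nonleaf_other[OF G xV xnl g_sym[OF G sx]] by blast
  obtain y' where y': "E y y'" "y' \<noteq> s" using nonleaf_other[OF G yV ynl g_sym[OF G sy]] by blast
  show False
  proof (cases "\<exists>w w' u. E s w \<and> E w w' \<and> w' \<noteq> s \<and> E w' u \<and> leaf V E u")
    case True
    then obtain w w' u where "E s w" "E w w'" "w' \<noteq> s" "E w' u" "leaf V E u" by blast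
    then show False using case1[OF G U l(2) l(1)] by blast
  next
    case False
    then have nc1: "\<forall>w w' u. E s w \<longrightarrow> E w w' \<longrightarrow> w' \<noteq> s \<longrightarrow> E w' u \<longrightarrow> \<not> leaf V E u" by blast
    show False
    proof (cases "\<exists>z v. E x' z \<and> z \<noteq> x \<and> E z v \<and> v \<noteq> x' \<and> (\<forall>c. E v c \<longrightarrow> c \<noteq> z \<longrightarrow> leaf V E c)")
      case True
      then obtain z v where "E x' z" "z \<noteq> x" "E z v" "v \<noteq> x'" "\<forall>c. E v c \<longrightarrow> c \<noteq> z \<longrightarrow> leaf V E c" by blast
      then show False using case2a[OF G gi U nss nc1 sx x'] by blast
    next
      case nx: False
      show False
      proof (cases "\<exists>z v. E y' z \<and> z \<noteq> y \<and> E z v \<and> v \<noteq> y' \<and> (\<forall>c. E v c \<longrightarrow> c \<noteq> z \<longrightarrow> leaf V E c)")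
        case True
        then obtain z v where "E y' z" "z \<noteq> y" "E z v" "v \<noteq> y'" "\<forall>c. E v c \<longrightarrow> c \<noteq> z \<longrightarrow> leaf V E c" by blast
        then show False using case2a[OF G gi U nss nc1 sy y'] by blast
      next
        case ny: False
        have n2x: "\<forall>z v. E x' z \<longrightarrow> z \<noteq> x \<longrightarrow> E z v \<longrightarrow> v \<noteq> x' \<longrightarrow> (\<exists>u. E v u \<and> u \<noteq> z \<and> \<not> leaf V E u)"
          using nx by blast
        have n2y: "\<forall>z v. E y' z \<longrightarrow> z \<noteq> y \<longrightarrow> E z v \<longrightarrow> v \<noteq> y' \<longrightarrow> (\<exists>u. E v u \<and> u \<noteq> z \<and> \<not> leaf V E u)"
          using ny by blast
        show False using case3[OF G gi U sx x' sy y' xy(3) n2x n2y] .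
      qed
    qed
  qed
qed

end
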